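(* Let $Q$ be a finite quiver with vertex set $Q_0$ and arrow set $Q_1$, let $k$ be an algebraically closed field of arbitrary characteristic, and let $\Theta,\sigma:\mathbb{Z}Q_0\to\mathbb{Z}$ be linear functions with $\sigma_v>0$ for all $v\in Q_0$. Let $M$ be a finite dimensional representation of $Q$ over $k$ which is not $(\Theta,\sigma)$-semistable. Let $0\subset M_1\subset\cdots\subset M_t\subset M_{t+1}=M$ together with real weights $\Gamma_1<\Gamma_2<\cdots<\Gamma_{t+1}$ be the Kempf filtration of $M$, i.e. the weighted filtration of $M$ by subrepresentations at which the Kempf function $$K(M_\bullet,\Gamma)=\frac{\sum_{i=1}^{t+1}\Gamma_i\,[\Theta(M)\sigma(M^i)-\sigma(M)\Theta(M^i)]}{\sqrt{\sum_{i=1}^{t+1}\sigma(M^i)\Gamma_i^2}},\qquad M^i=M_i/M_{i-1},$$ attains its maximum among all weighted filtrations of $M$ by subrepresentations with strictly increasing real weights. Then the filtration $0\subset M_1\subset\cdots\subset M_{t+1}=M$ is the Harder-Narasimhan filtration of $M$ with respect to $(\Theta,\sigma)$.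
   Context: A representation $M$ of $Q$ over $k$ consists of finite dimensional $k$-vector spaces $M_v$ ($v\in Q_0$) and $k$-linear maps $M_\alpha:M_{v_i}\to M_{v_j}$ for each arrow $\alpha:v_i\to v_j$; its dimension vector is $\underline{\dim}M=\sum_v \dim_k M_v\cdot v\in\mathbb{N}Q_0$. Write $\Theta(M)=\sum_v\Theta_v\dim_kM_v$ and $\sigma(M)=\sum_v\sigma_v\dim_kM_v$, and for $M\neq 0$ define the slope $\mu_{(\Theta,\sigma)}(M)=\Theta(M)/\sigma(M)$. $M$ is $(\Theta,\sigma)$-semistable if $\mu_{(\Theta,\sigma)}(M')\le\mu_{(\Theta,\sigma)}(M)$ for all non-zero proper subrepresentations $M'\subset M$. A weighted filtration is a chain of subrepresentations $0\subset M_1\subset\cdots\subset M_{t+1}=M$ with strict inclusions (so each $M^i\neq0$ and $\sigma(M^i)>0$) together with real numbers $\Gamma_1<\cdots<\Gamma_{t+1}$. For an unstable $M$, such a maximizing weighted filtration exists and its filtration is unique (Kempf's theorem, applied to the action of $\prod_v GL(M_v)$ on the representation space with the character $\prod_v\det(g_v)^{\Theta(d)\sigma_v-\sigma(d)\Theta_v}$ and the length $\sqrt{\sum_i\sigma(M^i)\Gamma_i^2}$). The Harder-Narasimhan filtration of $M$ is the unique filtration $0\subset M_1\subset\cdots\subset M_{t+1}=M$ by subrepresentations such that, with $M^i=M_i/M_{i-1}$, one has $\mu_{(\Theta,\sigma)}(M^1)>\mu_{(\Theta,\sigma)}(M^2)>\cdots>\mu_{(\Theta,\sigma)}(M^{t+1})$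 and each $M^i$ is $(\Theta,\sigma)$-semistable. *)

theory Defs
  imports Main "HOL-Library.Function_Algebras" "HOL-Computational_Algebra.Polynomial"
begin

definition alg_closed :: "'k::field itself \<Rightarrow> bool" where
  "alg_closed _ \<longleftrightarrow> (\<forall>p :: 'k poly. degree p > 0 \<longrightarrow> (\<exists>x. poly p x = 0))"

(* Vectors in k^n are modelled as functions nat => k vanishing from index n on. *)
definition sc :: "'k::field \<Rightarrow> (nat \<Rightarrow> 'k) \<Rightarrow> (nat \<Rightarrow> 'k)" where
  "sc c x = (\<lambda>i. c * x i)"

definition ambient :: "nat \<Rightarrow> (nat \<Rightarrow> 'k::field) set" where
  "ambient n = {x. \<forall>i\<ge>n. x i = 0}"

definition vdim :: "(nat \<Rightarrow> 'k::field) set \<Rightarrow> nat" where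
  "vdim U = vector_space.dim (sc :: 'k \<Rightarrow> _) U"

(* A representation of the quiver with vertex type 'v, arrow type 'a, source map s,
   target map t: M_v = k^(d v), M_alpha given by a (d (t alpha)) x (d (s alpha)) matrix A alpha. *)
definition rep_map ::
  "('v \<Rightarrow> nat) \<Rightarrow> ('a \<Rightarrow> nat \<Rightarrow> nat \<Rightarrow> 'k::field) \<Rightarrow> ('a \<Rightarrow> 'v) \<Rightarrow> ('a \<Rightarrow> 'v)
     \<Rightarrow> 'a \<Rightarrow> (nat \<Rightarrow> 'k) \<Rightarrow> (nat \<Rightarrow> 'k)" where
  "rep_map d A s t \<alpha> x = (\<lambda>i. if i < d (t \<alpha>) then (\<Sum>j<d (s \<alpha>). A \<alpha> i j * x j) else 0)"

definition is_subrep ::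
  "('v \<Rightarrow> nat) \<Rightarrow> ('a \<Rightarrow> nat \<Rightarrow> nat \<Rightarrow> 'k::field) \<Rightarrow> ('a \<Rightarrow> 'v) \<Rightarrow> ('a \<Rightarrow> 'v)
     \<Rightarrow> ('v \<Rightarrow> (nat \<Rightarrow> 'k) set) \<Rightarrow> bool" where
  "is_subrep d A s t U \<longleftrightarrow>
     (\<forall>v. module.subspace (sc :: 'k \<Rightarrow> _) (U v) \<and> U v \<subseteq> ambient (d v)) \<and>
     (\<forall>\<alpha>. \<forall>x\<in>U (s \<alpha>). rep_map d A s t \<alpha> x \<in> U (t \<alpha>))"

definition zero_rep :: "'v \<Rightarrow> (nat \<Rightarrow> 'k::field) set" where
  "zero_rep = (\<lambda>v. {0})"

definition full_rep :: "('v \<Rightarrow> nat) \<Rightarrow> 'v \<Rightarrow> (nat \<Rightarrow> 'k::field) set" where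
  "full_rep d = (\<lambda>v. ambient (d v))"

definition lin_dim :: "('v::finite \<Rightarrow> int) \<Rightarrow> ('v \<Rightarrow> (nat \<Rightarrow> 'k::field) set) \<Rightarrow> int" where
  "lin_dim \<Theta> U = (\<Sum>v\<in>UNIV. \<Theta> v * int (vdim (U v)))"

(* Value of a linear function on the subquotient N/L (L \<subseteq> N subrepresentations):
   dim (N_v / L_v) = dim N_v - dim L_v. *)
definition lin_sq :: "('v::finite \<Rightarrow> int) \<Rightarrow> ('v \<Rightarrow> (nat \<Rightarrow> 'k::field) set)
     \<Rightarrow> ('v \<Rightarrow> (nat \<Rightarrow> 'k) set) \<Rightarrow> int" where
  "lin_sq \<Theta> L N = lin_dim \<Theta> N - lin_dim \<Theta> L"

definition slope_sq :: "('v::finite \<Rightarrow> int) \<Rightarrow> ('v \<Rightarrow> int) \<Rightarrow> ('v \<Rightarrow> (nat \<Rightarrow> 'k::field) set)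
     \<Rightarrow> ('v \<Rightarrow> (nat \<Rightarrow> 'k) set) \<Rightarrow> real" where
  "slope_sq \<Theta> \<sigma> L N = real_of_int (lin_sq \<Theta> L N) / real_of_int (lin_sq \<sigma> L N)"

(* Subrepresentations of N/L
   correspond to subrepresentations U of M with L \<subseteq> U \<subseteq> N (U/L is then the subrepresentation);
   non-zero proper means U \<noteq> L and U \<noteq> N. *)
definition semistable_sq ::
  "('v::finite \<Rightarrow> nat) \<Rightarrow> ('a \<Rightarrow> nat \<Rightarrow> nat \<Rightarrow> 'k::field) \<Rightarrow> ('a \<Rightarrow> 'v) \<Rightarrow> ('a \<Rightarrow> 'v)
     \<Rightarrow> ('v \<Rightarrow> int) \<Rightarrow> ('v \<Rightarrow> int) \<Rightarrow> ('v \<Rightarrow> (nat \<Rightarrow> 'k) set) \<Rightarrow> ('v \<Rightarrow> (nat \<Rightarrow> 'k) set) \<Rightarrow> bool" where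
  "semistable_sq d A s t \<Theta> \<sigma> L N \<longleftrightarrow>
     (\<forall>U. is_subrep d A s t U \<longrightarrow> (\<forall>v. L v \<subseteq> U v \<and> U v \<subseteq> N v) \<longrightarrow> U \<noteq> L \<longrightarrow> U \<noteq> N \<longrightarrow>
        slope_sq \<Theta> \<sigma> L U \<le> slope_sq \<Theta> \<sigma> L N)"

definition semistable ::
  "('v::finite \<Rightarrow> nat) \<Rightarrow> ('a \<Rightarrow> nat \<Rightarrow> nat \<Rightarrow> 'k::field) \<Rightarrow> ('a \<Rightarrow> 'v) \<Rightarrow> ('a \<Rightarrow> 'v)
     \<Rightarrow> ('v \<Rightarrow> int) \<Rightarrow> ('v \<Rightarrow> int) \<Rightarrow> bool" where
  "semistable d A s t \<Theta> \<sigma> \<longleftrightarrow> semistable_sq d A s t \<Theta> \<sigma> zero_rep (full_rep d)"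

(* A filtration 0 = F 0 \<subset> F 1 \<subset> ... \<subset> F (n+1) = M by subrepresentations
   (here n plays the role of t in the paper), strict inclusions. *)
definition is_filtration ::
  "('v::finite \<Rightarrow> nat) \<Rightarrow> ('a \<Rightarrow> nat \<Rightarrow> nat \<Rightarrow> 'k::field) \<Rightarrow> ('a \<Rightarrow> 'v) \<Rightarrow> ('a \<Rightarrow> 'v)
     \<Rightarrow> nat \<Rightarrow> (nat \<Rightarrow> 'v \<Rightarrow> (nat \<Rightarrow> 'k) set) \<Rightarrow> bool" where
  "is_filtration d A s t n F \<longleftrightarrow>
     F 0 = zero_rep \<and> F (n + 1) = full_rep d \<and>
     (\<forall>i\<in>{1..n+1}. is_subrep d A s t (F i)) \<and>
     (\<forall>i\<in>{1..n+1}. (\<forall>v. F (i - 1) v \<subseteq> F i v) \<and> F (i - 1) \<noteq> F i)"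

definition is_weighted_filtration ::
  "('v::finite \<Rightarrow> nat) \<Rightarrow> ('a \<Rightarrow> nat \<Rightarrow> nat \<Rightarrow> 'k::field) \<Rightarrow> ('a \<Rightarrow> 'v) \<Rightarrow> ('a \<Rightarrow> 'v)
     \<Rightarrow> nat \<Rightarrow> (nat \<Rightarrow> 'v \<Rightarrow> (nat \<Rightarrow> 'k) set) \<Rightarrow> (nat \<Rightarrow> real) \<Rightarrow> bool" where
  "is_weighted_filtration d A s t n F \<Gamma> \<longleftrightarrow>
     is_filtration d A s t n F \<and> (\<forall>i\<in>{1..n}. \<Gamma> i < \<Gamma> (i + 1))"

definition kempf_fun ::
  "('v::finite \<Rightarrow> nat) \<Rightarrow> ('v \<Rightarrow> int) \<Rightarrow> ('v \<Rightarrow> int)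
     \<Rightarrow> nat \<Rightarrow> (nat \<Rightarrow> 'v \<Rightarrow> (nat \<Rightarrow> 'k::field) set) \<Rightarrow> (nat \<Rightarrow> real) \<Rightarrow> real" where
  "kempf_fun d \<Theta> \<sigma> n F \<Gamma> =
     (\<Sum>i=1..n+1. \<Gamma> i *
        real_of_int (lin_dim \<Theta> (full_rep d :: 'v \<Rightarrow> (nat \<Rightarrow> 'k) set) * lin_sq \<sigma> (F (i - 1)) (F i)
                     - lin_dim \<sigma> (full_rep d :: 'v \<Rightarrow> (nat \<Rightarrow> 'k) set) * lin_sq \<Theta> (F (i - 1)) (F i)))
     / sqrt (\<Sum>i=1..n+1. real_of_int (lin_sq \<sigma> (F (i - 1)) (F i)) * (\<Gamma> i)\<^sup>2)"

definition is_HN_filtration ::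
  "('v::finite \<Rightarrow> nat) \<Rightarrow> ('a \<Rightarrow> nat \<Rightarrow> nat \<Rightarrow> 'k::field) \<Rightarrow> ('a \<Rightarrow> 'v) \<Rightarrow> ('a \<Rightarrow> 'v)
     \<Rightarrow> ('v \<Rightarrow> int) \<Rightarrow> ('v \<Rightarrow> int) \<Rightarrow> nat \<Rightarrow> (nat \<Rightarrow> 'v \<Rightarrow> (nat \<Rightarrow> 'k) set) \<Rightarrow> bool" where
  "is_HN_filtration d A s t \<Theta> \<sigma> n F \<longleftrightarrow>
     is_filtration d A s t n F \<and>
     (\<forall>i\<in>{1..n}. slope_sq \<Theta> \<sigma> (F (i - 1)) (F i) > slope_sq \<Theta> \<sigma> (F i) (F (i + 1))) \<and>
     (\<forall>i\<in>{1..n+1}. semistable_sq d A s t \<Theta> \<sigma> (F (i - 1)) (F i))"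

end

theory Submission
  imports Defs
begin


lemma vs_sc: "vector_space (sc :: 'k::field \<Rightarrow> (nat \<Rightarrow> 'k) \<Rightarrow> _)"
  by unfold_locales (auto simp: sc_def fun_eq_iff algebra_simps)

interpretation V: vector_space "sc :: 'k::field \<Rightarrow> (nat \<Rightarrow> 'k) \<Rightarrow> _"
  by (rule vs_sc)

lemma sum_fun_apply: "finite A \<Longrightarrow> (sum f A) x = (\<Sum>a\<in>A. f a x)"
  by (induction A rule: finite_induct) auto

definition ev :: "nat \<Rightarrow> nat \<Rightarrow> 'k::field" where
  "ev j = (\<lambda>i. if i = j then 1 else 0)"

lemma ambient_span: "ambient n \<subseteq> V.span ((ev :: nat \<Rightarrow> nat \<Rightarrow> 'k::field) ` {..<n})"
proof
  fix x :: "nat \<Rightarrow> 'k" assume x: "x \<in> ambient n"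
  have eq: "x = (\<Sum>j<n. sc (x j) (ev j))"
  proof
    fix i
    have "(\<Sum>j<n. sc (x j) (ev j)) i = (\<Sum>j\<in>{..<n}. if j = i then x j else 0)"
      unfolding sum_fun_apply[OF finite_lessThan] sc_def ev_def by (rule sum.cong) auto
    also have "\<dots> = x i" using x by (auto simp: sum.delta' ambient_def)
    finally show "x i = (\<Sum>j<n. sc (x j) (ev j)) i" by simp
  qed
  have "(\<Sum>j<n. sc (x j) (ev j)) \<in> V.span ((ev :: nat \<Rightarrow> nat \<Rightarrow> 'k) ` {..<n})"
    by (intro V.span_sum V.span_scale V.span_base) auto
  then show "x \<in> V.span ((ev :: nat \<Rightarrow> nat \<Rightarrow> 'k) ` {..<n})" using eq by simp
qed

lemma vdim_zero: "vdim ({0} :: (nat \<Rightarrow> 'k::field) set) = 0"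
  unfolding vdim_def using V.dim_eq_card[of "{}" "{0::nat\<Rightarrow>'k}"] by (simp add: V.independent_empty)

lemma vdim_mono:
  fixes U W :: "(nat \<Rightarrow> 'k::field) set"
  assumes U: "V.subspace U" and W: "V.subspace W" and UW: "U \<subseteq> W" and Wa: "W \<subseteq> ambient n"
  shows "vdim U \<le> vdim W \<and> (U \<noteq> W \<longrightarrow> vdim U < vdim W)"
proof -
  let ?E = "(ev :: nat \<Rightarrow> nat \<Rightarrow> 'k) ` {..<n}"
  have fE: "finite ?E" by simp
  have Wsp: "W \<subseteq> V.span ?E" using Wa ambient_span by blast
  obtain B where B: "B \<subseteq> U" "V.independent B" "U \<subseteq> V.span B" "card B = V.dim U"
    using V.basis_exists by blast
  obtain C where C: "B \<subseteq> C" "C \<subseteq> W" "V.independent C" "W \<subseteq> V.span C"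
    using V.maximal_independent_subset_extend[of B W] B UW by blast
  have fC: "finite C" using V.independent_span_bound[OF fE C(3)] C(2) Wsp by blast
  have dC: "card C = V.dim W" using V.basis_card_eq_dim C by blast
  have le: "card B \<le> card C" using fC C(1) card_mono by blast
  moreover have "U \<noteq> W \<longrightarrow> card B < card C"
  proof
    assume ne: "U \<noteq> W"
    show "card B < card C"
    proof (rule ccontr)
      assume "\<not> card B < card C"
      then have "B = C" using le fC C(1) card_subset_eq by (metis le_antisym not_less)
      then have "W \<subseteq> U" using C(4) V.span_minimal[OF B(1) U] by blast
      then show False using ne UW by blast
    qed
  qed
  ultimately show ?thesis using B(4) dC unfolding vdim_def by simp
qed



definition kf :: "(nat \<Rightarrow> real) \<Rightarrow> (nat \<Rightarrow> real) \<Rightarrow> nat \<Rightarrow> (nat \<Rightarrow> real) \<Rightarrow> real" where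
  "kf C S m G = (\<Sum>j=1..m. G j * C j) / sqrt (\<Sum>j=1..m. S j * (G j)\<^sup>2)"

lemma lemA:
  fixes C S G :: "nat \<Rightarrow> real"
  assumes S: "\<forall>j\<in>{1..m}. S j > 0"
    and inc: "\<forall>j\<in>{1..<m}. G j < G (j+1)"
    and pos: "kf C S m G > 0"
    and max: "\<forall>G'. (\<forall>j\<in>{1..<m}. G' j < G' (j+1)) \<longrightarrow> kf C S m G' \<le> kf C S m G"
  shows "\<exists>l>0. \<forall>j\<in>{1..m}. G j = l * (C j / S j)"
proof -
  define a where "a j = C j / S j" for j
  have Ca: "C j = S j * a j" if "j \<in> {1..m}" for j proof - have "S j > 0" using S that by auto then show ?thesis by (simp add: a_def) qed
  define p where "p = (\<Sum>j=1..m. G j * C j)"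
  define q where "q = (\<Sum>j=1..m. S j * (a j)\<^sup>2)"
  define r where "r = (\<Sum>j=1..m. S j * (G j)\<^sup>2)"
  have p2: "p = (\<Sum>j=1..m. S j * G j * a j)" unfolding p_def
    by (rule sum.cong) (auto simp: Ca)
  have r0: "r \<ge> 0" unfolding r_def using S by (auto intro!: sum_nonneg)
  have q0: "q \<ge> 0" unfolding q_def using S by (auto intro!: sum_nonneg)
  have kfG: "kf C S m G = p / sqrt r" by (simp add: kf_def p_def r_def)
  have rpos: "r > 0" using pos r0 kfG by (cases "r = 0") auto
  have ppos: "p > 0" using pos rpos kfG by (simp add: divide_pos_pos zero_less_divide_iff)
  define D where "D = (\<lambda>j. (G (j+1) - G j) / (\<bar>a (j+1) - a j\<bar> + 1)) ` {1..<m}"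
  define e where "e = Min (insert 1 D)"
  have fD: "finite D" unfolding D_def by simp
  have Dpos: "\<forall>x\<in>D. x > 0" unfolding D_def using inc by (auto intro!: divide_pos_pos)
  have epos: "e > 0" unfolding e_def using fD Dpos by (simp add: Min_gr_iff)
  have ele: "e \<le> (G (j+1) - G j) / (\<bar>a (j+1) - a j\<bar> + 1)" if "j \<in> {1..<m}" for j
    unfolding e_def using fD that by (intro Min_le) (auto simp: D_def)
  define G' where "G' j = G j + e * a j" for j
  have inc': "\<forall>j\<in>{1..<m}. G' j < G' (j+1)"
  proof
    fix j assume j: "j \<in> {1..<m}"
    have h: "e * (\<bar>a (j+1) - a j\<bar> + 1) \<le> G (j+1) - G j"
      using ele[OF j] by (simp add: le_divide_eq add_pos_nonneg)
    have "- (e * \<bar>a (j+1) - a j\<bar>) \<le> e * (a (j+1) - a j)"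
    proof -
      have "- \<bar>a (j+1) - a j\<bar> \<le> a (j+1) - a j" by simp
      then have "e * (- \<bar>a (j+1) - a j\<bar>) \<le> e * (a (j+1) - a j)"
        using epos by (intro mult_left_mono) auto
      then show ?thesis by simp
    qed
    then show "G' j < G' (j+1)" using h epos unfolding G'_def by (simp add: algebra_simps)
  qed
  have n': "(\<Sum>j=1..m. G' j * C j) = p + e * q"
  proof -
    have "(\<Sum>j=1..m. G' j * C j) = (\<Sum>j=1..m. G j * C j + e * (S j * (a j)\<^sup>2))"
      by (rule sum.cong) (auto simp: G'_def Ca algebra_simps power2_eq_square)
    then show ?thesis by (simp add: sum.distrib sum_distrib_left p_def q_def)
  qed
  have d': "(\<Sum>j=1..m. S j * (G' j)\<^sup>2) = r + 2 * e * p + e\<^sup>2 * q"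
  proof -
    have "(\<Sum>j=1..m. S j * (G' j)\<^sup>2) = (\<Sum>j=1..m. S j * (G j)\<^sup>2 + (2 * e) * (S j * G j * a j) + e\<^sup>2 * (S j * (a j)\<^sup>2))"
      by (rule sum.cong) (auto simp: G'_def algebra_simps power2_eq_square)
    then show ?thesis by (simp add: sum.distrib sum_distrib_left[symmetric] p2 q_def r_def)
  qed
  define r' where "r' = r + 2 * e * p + e\<^sup>2 * q"
  have r'pos: "r' > 0" unfolding r'_def using rpos epos ppos q0 by (simp add: add_pos_nonneg)
  have "kf C S m G' \<le> kf C S m G" using max inc' by blast
  then have le: "(p + e * q) / sqrt r' \<le> p / sqrt r"
    using kfG n' d' by (simp add: kf_def r'_def)
  have "(p + e * q) * sqrt r \<le> p * sqrt r'"
      proof -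
    have "(p + e * q) / sqrt r' * (sqrt r' * sqrt r) \<le> p / sqrt r * (sqrt r' * sqrt r)"
      using le r'pos rpos by (intro mult_right_mono) auto
    moreover have "(p + e * q) / sqrt r' * (sqrt r' * sqrt r) = (p + e * q) * sqrt r"
      using r'pos by simp
    moreover have "p / sqrt r * (sqrt r' * sqrt r) = p * sqrt r'"
      using rpos by simp
    ultimately show ?thesis by simp
  qed
  then have "((p + e * q) * sqrt r)\<^sup>2 \<le> (p * sqrt r')\<^sup>2"
    using ppos epos q0 rpos by (intro power_mono) auto
  then have "(p + e * q)\<^sup>2 * r \<le> p\<^sup>2 * r'"
    using rpos r'pos by (simp add: power_mult_distrib)
  then have "e * (q * r - p\<^sup>2) * (2 * p + e * q) \<le> 0"
    unfolding r'_def by (simp add: algebra_simps power2_eq_square)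
  moreover have "2 * p + e * q > 0" using ppos epos q0 by (simp add: add_pos_nonneg)
  ultimately have qr: "q * r - p\<^sup>2 \<le> 0" using epos
    by (metis mult_pos_pos not_le zero_less_mult_iff)
  have expand: "(\<Sum>j=1..m. S j * (q * G j - p * a j)\<^sup>2) = q * (q * r - p\<^sup>2)"
  proof -
    have "(\<Sum>j=1..m. S j * (q * G j - p * a j)\<^sup>2) =
          (\<Sum>j=1..m. q\<^sup>2 * (S j * (G j)\<^sup>2) - (2 * q * p) * (S j * G j * a j) + p\<^sup>2 * (S j * (a j)\<^sup>2))"
      by (rule sum.cong) (auto simp: algebra_simps power2_eq_square)
    also have "\<dots> = q\<^sup>2 * r - 2 * q * p * p + p\<^sup>2 * q"
      by (simp add: sum.distrib sum_subtractf sum_distrib_left[symmetric] p2 q_def r_def)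
    finally show ?thesis by (simp add: algebra_simps power2_eq_square)
  qed
  have "(\<Sum>j=1..m. S j * (q * G j - p * a j)\<^sup>2) \<le> 0"
    using expand q0 qr by (simp add: mult_nonneg_nonpos)
  moreover have nn: "\<forall>j\<in>{1..m}. S j * (q * G j - p * a j)\<^sup>2 \<ge> 0" using S by auto
  moreover have nn': "\<And>j. j \<in> {1..m} \<Longrightarrow> 0 \<le> S j * (q * G j - p * a j)\<^sup>2" using nn by blast
  ultimately have s0: "(\<Sum>j=1..m. S j * (q * G j - p * a j)\<^sup>2) = 0"
    by (meson antisym sum_nonneg)
  have z: "\<forall>j\<in>{1..m}. S j * (q * G j - p * a j)\<^sup>2 = 0"
    using iffD1[OF sum_nonneg_eq_0_iff[OF finite_atLeastAtMost nn'] s0] .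
  have eqj: "q * G j = p * a j" if "j \<in> {1..m}" for j
  proof -
    have "S j * (q * G j - p * a j)\<^sup>2 = 0" using z that by blast
    moreover have "S j > 0" using S that by blast
    ultimately have "(q * G j - p * a j)\<^sup>2 = 0" by simp
    then show ?thesis by simp
  qed
  have qpos: "q > 0"
  proof (rule ccontr)
    assume "\<not> q > 0" then have "q = 0" using q0 by simp
    then have "\<forall>j\<in>{1..m}. a j = 0" using eqj ppos by auto
    then have "p = 0" using p2 by simp
    then show False using ppos by simp
  qed
  show ?thesis
      proof (intro exI[of _ "p/q"] conjI ballI)
    show "p / q > 0" using qpos ppos by simp
    fix j assume j: "j \<in> {1..m}"
    have "G j = p * a j / q" using eqj[OF j] qpos by (metis nonzero_mult_div_cancel_left less_irrefl)
    then show "G j = p / q * (C j / S j)" by (simp add: a_def)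
  qed
qed

lemma sum_ins:
  fixes h h' :: "nat \<Rightarrow> real"
  assumes i: "1 \<le> i" "i \<le> m" and lo: "\<forall>j<i. h' j = h j" and hi: "\<forall>j\<ge>i+2. h' j = h (j-1)"
  shows "(\<Sum>j=1..m+1. h' j) = (\<Sum>j=1..m. h j) - h i + h' i + h' (i+1)"
proof -
  obtain k where m: "m = i + k" using i le_Suc_ex by blast
  obtain i0 where i0: "i = Suc i0" using i by (cases i) auto
  have "(\<Sum>j=1..i+k+1. h' j) = (\<Sum>j=1..i+k. h j) - h i + h' i + h' (i+1)"
  proof (induction k)
    case 0
    have e1: "(\<Sum>j=1..i0. h' j) = (\<Sum>j=1..i0. h j)"
      using lo i0 by (intro sum.cong) auto
    have "(\<Sum>j=1..i+0+1. h' j) = (\<Sum>j=1..i0. h' j) + h' i + h' (i+1)"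
      using i0 by (simp add: sum.cl_ivl_Suc)
    moreover have "(\<Sum>j=1..i+0. h j) = (\<Sum>j=1..i0. h j) + h i"
      using i0 by (simp add: sum.cl_ivl_Suc)
    ultimately show ?case using e1 by simp
  next
    case (Suc k)
    have "(\<Sum>j=1..i+Suc k+1. h' j) = (\<Sum>j=1..i+k+1. h' j) + h' (i + k + 2)"
      by (simp add: sum.cl_ivl_Suc)
    moreover have "h' (i + k + 2) = h (i + k + 1)" using hi by force
    moreover have "(\<Sum>j=1..i+Suc k. h j) = (\<Sum>j=1..i+k. h j) + h (i+k+1)"
      by (simp add: sum.cl_ivl_Suc)
    ultimately show ?case using Suc by simp
  qed
  then show ?thesis using m by simp
qed

lemma lemC:
  fixes C S G C' S' :: "nat \<Rightarrow> real"
  assumes i: "1 \<le> i" "i \<le> m"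
    and S: "\<forall>j\<in>{1..m}. S j > 0"
    and S'i: "S' i > 0"
    and lo: "\<forall>j<i. C' j = C j \<and> S' j = S j"
    and hi: "\<forall>j\<ge>i+2. C' j = C (j-1) \<and> S' j = S (j-1)"
    and spC: "C' i + C' (i+1) = C i" and spS: "S' i + S' (i+1) = S i"
    and l: "l > 0" and G: "\<forall>j\<in>{1..m}. G j = l * (C j / S j)"
    and inc: "\<forall>j\<in>{1..<m}. G j < G (j+1)"
    and pos: "kf C S m G > 0"
    and lt: "C' i / S' i < C i / S i"
  shows "\<exists>G'. (\<forall>j\<in>{1..<m+1}. G' j < G' (j+1)) \<and> kf C S m G < kf C' S' (m+1) G'"
proof -
  define p where "p = (\<Sum>j=1..m. G j * C j)"
  define r where "r = (\<Sum>j=1..m. S j * (G j)\<^sup>2)"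
  have rp: "r = l * p" unfolding r_def p_def sum_distrib_left
  proof (rule sum.cong)
    fix j assume j: "j \<in> {1..m}"
    then have "S j > 0" using S by blast
    then show "S j * (G j)\<^sup>2 = l * (G j * C j)" using G j
      by (simp add: power2_eq_square field_simps)
  qed simp
  have r0: "r \<ge> 0" unfolding r_def using S by (auto intro!: sum_nonneg)
  have kfG: "kf C S m G = p / sqrt r" by (simp add: kf_def p_def r_def)
  have rpos: "r > 0" using pos r0 kfG by (cases "r = 0") auto
  have ppos: "p > 0" using rpos rp l by (simp add: zero_less_mult_iff)
  define a where "a = C i / S i"
  define a' where "a' = C' i / S' i"
  define D where "D = a - a'"
  define gi where "gi = G i"
  define s' where "s' = S' i"
  have Dpos: "D > 0" using lt by (simp add: D_def a_def a'_def)
  have gia: "gi = l * a" using G i by (simp add: gi_def a_def)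
  have C'i: "C' i = s' * a'" using S'i by (simp add: s'_def a'_def)
  have s'pos: "s' > 0" using S'i by (simp add: s'_def)
  define dl where "dl = min (l * D) (min (r / (2 * s' * (\<bar>gi\<bar> + 1))) (if i = 1 then 1 else (G i - G (i-1)) / 2))"
  have third: "(if i = 1 then 1 else (G i - G (i-1)) / 2) > (0::real)"
  proof (cases "i = 1")
    case False
    then have "i - 1 \<in> {1..<m}" using i by auto
    then have "G (i-1) < G (i - 1 + 1)" using inc by blast
    then show ?thesis using False i by simp
  qed simp
  have dlpos: "dl > 0" unfolding dl_def using l Dpos rpos s'pos third
    by (simp add: add_pos_nonneg)
  have dl1: "dl \<le> l * D" unfolding dl_def by simp
  have dl2: "dl \<le> r / (2 * s' * (\<bar>gi\<bar> + 1))" unfolding dl_def by simp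
  have dl3': "dl \<le> (if i = 1 then 1 else (G i - G (i-1)) / 2)" unfolding dl_def
    by (meson min.cobounded2 order_trans)
  have dl3: "i \<noteq> 1 \<Longrightarrow> dl \<le> (G i - G (i-1)) / 2" using dl3' by simp
  define G' where "G' j = (if j < i then G j else if j = i then G i - dl else G (j-1))" for j
  have inc': "\<forall>j\<in>{1..<m+1}. G' j < G' (j+1)"
  proof
    fix j assume j: "j \<in> {1..<m+1}"
    consider "j + 1 < i" | "j + 1 = i" | "j = i" | "j = i + 1" | "j \<ge> i + 2" by linarith
    then show "G' j < G' (j+1)"
    proof cases
      case 1 then have "j \<in> {1..<m}" using j i by auto
      then show ?thesis using inc 1 by (simp add: G'_def)
    next
      case 2 then have "i \<noteq> 1" using j by auto
      then have "dl \<le> (G i - G (i-1)) / 2" by (rule dl3)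
      moreover have "G (i-1) < G i" using third \<open>i \<noteq> 1\<close> by simp
      moreover have ij: "i - 1 = j" using 2 by simp
      ultimately show ?thesis using 2 dlpos by (simp add: G'_def)
    next
      case 3 then show ?thesis using dlpos by (simp add: G'_def)
    next
      case 4 then have "i \<in> {1..<m}" using j i by auto
      then show ?thesis using inc 4 by (simp add: G'_def)
    next
      case 5 then have "j - 1 \<in> {1..<m}" using j i by auto
      then have "G (j-1) < G (j - 1 + 1)" using inc by blast
      then show ?thesis using 5 by (simp add: G'_def)
    qed
  qed
  have num': "(\<Sum>j=1..m+1. G' j * C' j) = p - dl * C' i"
  proof -
    have "(\<Sum>j=1..m+1. G' j * C' j) = p - G i * C i + G' i * C' i + G' (i+1) * C' (i+1)"
      unfolding p_def by (rule sum_ins[OF i]) (auto simp: G'_def lo hi)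
    also have "\<dots> = p - dl * C' i" using spC[symmetric] by (simp add: G'_def algebra_simps)
    finally show ?thesis .
  qed
  have den': "(\<Sum>j=1..m+1. S' j * (G' j)\<^sup>2) = r + s' * (dl\<^sup>2 - 2 * dl * gi)"
  proof -
    have "(\<Sum>j=1..m+1. S' j * (G' j)\<^sup>2) = r - S i * (G i)\<^sup>2 + S' i * (G' i)\<^sup>2 + S' (i+1) * (G' (i+1))\<^sup>2"
      unfolding r_def by (rule sum_ins[OF i]) (auto simp: G'_def lo hi)
    also have "\<dots> = r + s' * (dl\<^sup>2 - 2 * dl * gi)"
      using spS[symmetric] by (simp add: G'_def s'_def gi_def algebra_simps power2_eq_square)
    finally show ?thesis .
  qed
  define N where "N = p - dl * C' i"
  define R where "R = r + s' * (dl\<^sup>2 - 2 * dl * gi)"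
  have lN: "l * N = r - dl * s' * gi + l * dl * s' * D"
    unfolding N_def using rp C'i gia by (simp add: D_def algebra_simps)
  have bnd: "2 * (dl * s' * \<bar>gi\<bar>) < r"
  proof -
    have "dl * (2 * s' * (\<bar>gi\<bar> + 1)) \<le> r"
      using dl2 s'pos by (simp add: le_divide_eq add_pos_nonneg)
    moreover have "dl * s' > 0" using dlpos s'pos by simp
    moreover have "dl * (2 * s' * (\<bar>gi\<bar> + 1)) = 2 * (dl * s' * \<bar>gi\<bar>) + 2 * (dl * s')"
      by (simp add: algebra_simps)
    ultimately show ?thesis by linarith
  qed
  have gib: "dl * s' * gi \<le> dl * s' * \<bar>gi\<bar>"
    using dlpos s'pos by (intro mult_left_mono) auto
  have gib2: "- (dl * s' * \<bar>gi\<bar>) \<le> dl * s' * gi"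
  proof -
    have "dl * s' * (- \<bar>gi\<bar>) \<le> dl * s' * gi" using dlpos s'pos by (intro mult_left_mono) auto
    then show ?thesis by simp
  qed
  have lNpos: "l * N > 0"
  proof -
    have "l * dl * s' * D > 0" using l dlpos s'pos Dpos by simp
    moreover have "0 \<le> dl * s' * \<bar>gi\<bar>" using dlpos s'pos by simp
    ultimately show ?thesis using lN bnd gib by linarith
  qed
  have Rpos: "R > 0"
  proof -
    have "0 \<le> s' * dl\<^sup>2" using s'pos by simp
    moreover have "R = r + s' * dl\<^sup>2 - 2 * (dl * s' * gi)"
      unfolding R_def by (simp add: algebra_simps)
    moreover have "0 \<le> dl * s' * \<bar>gi\<bar>" using dlpos s'pos by simp
    ultimately show ?thesis using bnd gib by linarith
  qed
  have key: "r * R < (l * N)\<^sup>2"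
  proof -
    define X where "X = l * dl * s' * D - dl * s' * gi"
    have e: "(l * N)\<^sup>2 - r * R = 2 * r * l * dl * s' * D + X\<^sup>2 - r * dl\<^sup>2 * s'"
      unfolding lN R_def X_def by (simp add: algebra_simps power2_eq_square)
    have "r * dl * s' * (2 * l * D - dl) > 0"
      using rpos dlpos s'pos dl1 l Dpos by (intro mult_pos_pos) auto
    then have "2 * r * l * dl * s' * D - r * dl\<^sup>2 * s' > 0"
      by (simp add: algebra_simps power2_eq_square)
    moreover have "X\<^sup>2 \<ge> 0" by simp
    ultimately show ?thesis using e by linarith
  qed
  have "sqrt (r * R) < sqrt ((l * N)\<^sup>2)" using key by (rule real_sqrt_less_mono)
  then have sq: "sqrt r * sqrt R < l * N" using lNpos by (simp add: real_sqrt_mult)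
  have pr: "p = r / l" using rp l by (simp add: eq_divide_eq)
  have "kf C S m G = sqrt r / l"
  proof -
    have "p / sqrt r = (r / sqrt r) / l" unfolding pr by (simp add: field_split_simps)
    also have "r / sqrt r = sqrt r" using r0 by (rule real_div_sqrt)
    finally show ?thesis using kfG by simp
  qed
  moreover have "kf C' S' (m+1) G' = N / sqrt R"
    unfolding kf_def num' den' N_def R_def by (rule refl)
  moreover have "sqrt r / l < N / sqrt R"
  proof -
    have sR: "sqrt R > 0" using Rpos by simp
    have "sqrt r < l * N / sqrt R" using sq sR by (simp add: less_divide_eq)
    then have "sqrt r / l < (l * N / sqrt R) / l" using l by (rule divide_strict_right_mono)
    also have "(l * N / sqrt R) / l = N / sqrt R" using l by simp
    finally show ?thesis .
  qed
  ultimately have fin: "kf C S m G < kf C' S' (m+1) G'" by simp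
  show ?thesis by (rule exI[of _ G'], rule conjI[OF inc' fin])
qed



lemma lin_dim_mono:
  fixes U W :: "'v::finite \<Rightarrow> (nat \<Rightarrow> 'k::field) set"
  assumes sg: "\<forall>v. \<sigma> v > 0"
    and U: "\<forall>v. V.subspace (U v)"
    and W: "\<forall>v. V.subspace (W v) \<and> W v \<subseteq> ambient (d v)"
    and UW: "\<forall>v. U v \<subseteq> W v"
  shows "lin_dim \<sigma> U \<le> lin_dim \<sigma> W \<and> (U \<noteq> W \<longrightarrow> lin_dim \<sigma> U < lin_dim \<sigma> W)"
proof -
  have each: "vdim (U v) \<le> vdim (W v) \<and> (U v \<noteq> W v \<longrightarrow> vdim (U v) < vdim (W v))" for v
    using vdim_mono[of "U v" "W v" "d v"] U W UW by blast
  have le: "\<sigma> v * int (vdim (U v)) \<le> \<sigma> v * int (vdim (W v))" for v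
  proof -
    have "0 \<le> \<sigma> v" using sg by (simp add: less_imp_le)
    then show ?thesis using each[of v] by (intro mult_left_mono) auto
  qed
  have "lin_dim \<sigma> U \<le> lin_dim \<sigma> W" unfolding lin_dim_def by (intro sum_mono le)
  moreover have "U \<noteq> W \<longrightarrow> lin_dim \<sigma> U < lin_dim \<sigma> W"
  proof
    assume "U \<noteq> W"
    then have "\<exists>v. U v \<noteq> W v" by (simp add: fun_eq_iff)
    then obtain v where v: "U v \<noteq> W v" by blast
    have "\<sigma> v * int (vdim (U v)) < \<sigma> v * int (vdim (W v))"
      using each[of v] v sg by (intro mult_strict_left_mono) simp_all
    then show "lin_dim \<sigma> U < lin_dim \<sigma> W" unfolding lin_dim_def
      by (intro sum_strict_mono_ex1) (auto intro: le)
  qed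
  ultimately show ?thesis by blast
qed

lemma lin_dim_zero: "lin_dim \<sigma> (zero_rep :: 'v::finite \<Rightarrow> (nat \<Rightarrow> 'k::field) set) = 0"
  unfolding lin_dim_def zero_rep_def by (simp add: vdim_zero)

lemma zero_good: "V.subspace ((zero_rep :: 'v \<Rightarrow> (nat \<Rightarrow> 'k::field) set) v) \<and> zero_rep v \<subseteq> ambient (d v)"
  by (auto simp: zero_rep_def ambient_def)

lemma subrep_good: "is_subrep d A s t U \<Longrightarrow> V.subspace (U v) \<and> U v \<subseteq> ambient (d v)"
  unfolding is_subrep_def by blast

lemma filt_good:
  assumes "is_filtration d A s t n F" "j \<le> n + 1"
  shows "V.subspace (F j v) \<and> F j v \<subseteq> ambient (d v)"
proof (cases "j = 0")
  case True
  have "F 0 = zero_rep" using assms(1) unfolding is_filtration_def by (elim conjE)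
  then show ?thesis using True zero_good[of v d] by simp
next
  case False then have j: "j \<in> {1..n+1}" using assms(2) by simp
  have "\<forall>i\<in>{1..n+1}. is_subrep d A s t (F i)" using assms(1) unfolding is_filtration_def by (elim conjE)
  then have "is_subrep d A s t (F j)" using j by (rule bspec)
  then show ?thesis by (rule subrep_good)
qed

lemma filt_S_pos:
  assumes f: "is_filtration d A s t n F" and sg: "\<forall>v. \<sigma> v > 0" and j: "j \<in> {1..n+1}"
  shows "lin_sq \<sigma> (F (j-1)) (F j) > 0"
proof -
  have "\<forall>i\<in>{1..n+1}. (\<forall>v. F (i - 1) v \<subseteq> F i v) \<and> F (i - 1) \<noteq> F i"
    using f unfolding is_filtration_def by (elim conjE)
  then have inc: "(\<forall>v. F (j - 1) v \<subseteq> F j v) \<and> F (j - 1) \<noteq> F j" using j by (rule bspec)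
  have j1: "j \<le> n + 1" "j - 1 \<le> n + 1" using j by auto
  have "lin_dim \<sigma> (F (j-1)) < lin_dim \<sigma> (F j)"
    using lin_dim_mono[OF sg, of "F (j-1)" "F j" d] filt_good[OF f j1(2)] filt_good[OF f j1(1)] inc
    by blast
  then show ?thesis by (simp add: lin_sq_def)
qed

lemma div_rewrite:
  fixes a b x y :: int
  assumes "x \<noteq> 0"
  shows "real_of_int (a * x - b * y) / real_of_int x = real_of_int a - real_of_int b * (real_of_int y / real_of_int x)"
  using assms by (simp add: field_simps)



theorem theorem5p3:
  fixes d :: "'v::finite \<Rightarrow> nat"
    and A :: "'a::finite \<Rightarrow> nat \<Rightarrow> nat \<Rightarrow> 'k::field"
    and s t :: "'a \<Rightarrow> 'v"
    and \<Theta> \<sigma> :: "'v \<Rightarrow> int"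
    and n :: nat
    and F :: "nat \<Rightarrow> 'v \<Rightarrow> (nat \<Rightarrow> 'k) set"
    and \<Gamma> :: "nat \<Rightarrow> real"
  assumes "alg_closed TYPE('k)"
    and "\<forall>v. \<sigma> v > 0"
    and "\<not> semistable d A s t \<Theta> \<sigma>"
    and "is_weighted_filtration d A s t n F \<Gamma>"
    and "\<forall>n' F' \<Gamma>'. is_weighted_filtration d A s t n' F' \<Gamma>' \<longrightarrow>
           kempf_fun d \<Theta> \<sigma> n' F' \<Gamma>' \<le> kempf_fun d \<Theta> \<sigma> n F \<Gamma>"
  shows "is_HN_filtration d A s t \<Theta> \<sigma> n F"
proof -
  note sg = assms(2)
  have filt: "is_filtration d A s t n F" and inc: "\<forall>i\<in>{1..n}. \<Gamma> i < \<Gamma> (i + 1)"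
    using assms(4) unfolding is_weighted_filtration_def by auto
  note maxK = assms(5)
  define TM where "TM = lin_dim \<Theta> (full_rep d :: 'v \<Rightarrow> (nat \<Rightarrow> 'k) set)"
  define SM where "SM = lin_dim \<sigma> (full_rep d :: 'v \<Rightarrow> (nat \<Rightarrow> 'k) set)"
  define Cf where "Cf = (\<lambda>(F' :: nat \<Rightarrow> 'v \<Rightarrow> (nat \<Rightarrow> 'k) set) j.
     real_of_int (TM * lin_sq \<sigma> (F' (j - 1)) (F' j) - SM * lin_sq \<Theta> (F' (j - 1)) (F' j)))"
  define Sf where "Sf = (\<lambda>(F' :: nat \<Rightarrow> 'v \<Rightarrow> (nat \<Rightarrow> 'k) set) j.
     real_of_int (lin_sq \<sigma> (F' (j - 1)) (F' j)))"
  have keq: "kempf_fun d \<Theta> \<sigma> n' F' \<Gamma>' = kf (Cf F') (Sf F') (n'+1) \<Gamma>'" for n' F' \<Gamma>'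
    unfolding kempf_fun_def kf_def Cf_def Sf_def TM_def SM_def by simp
  have F0: "F 0 = zero_rep" using filt unfolding is_filtration_def by (elim conjE)
  have Fn: "F (n+1) = full_rep d" using filt unfolding is_filtration_def by (elim conjE)
  have subF: "\<forall>i\<in>{1..n+1}. is_subrep d A s t (F i)"
    using filt unfolding is_filtration_def by (elim conjE)
  have chain: "\<forall>i\<in>{1..n+1}. (\<forall>v. F (i - 1) v \<subseteq> F i v) \<and> F (i - 1) \<noteq> F i"
    using filt unfolding is_filtration_def by (elim conjE)
  have fullsub: "is_subrep d A s t (full_rep d)"
    using subF Fn by (metis atLeastAtMost_iff le_add2 order_refl)
  have fullgood: "\<forall>v. V.subspace (full_rep d v :: (nat \<Rightarrow> 'k) set) \<and> (full_rep d v :: (nat \<Rightarrow> 'k) set) \<subseteq> ambient (d v)"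
    using subrep_good[OF fullsub] by blast
  have zgood: "\<forall>v. V.subspace ((zero_rep :: 'v \<Rightarrow> (nat \<Rightarrow> 'k) set) v) \<and> (zero_rep v :: (nat \<Rightarrow> 'k) set) \<subseteq> ambient (d v)"
    by (intro allI) (rule zero_good)
  have Sf_pos: "\<forall>j\<in>{1..n+1}. Sf F j > 0"
    using filt_S_pos[OF filt sg] by (simp add: Sf_def)
  have rat: "Cf F' j / Sf F' j = real_of_int TM - real_of_int SM * slope_sq \<Theta> \<sigma> (F' (j-1)) (F' j)"
    if "Sf F' j \<noteq> 0" for F' j
  proof -
    have "lin_sq \<sigma> (F' (j-1)) (F' j) \<noteq> 0" using that by (simp add: Sf_def)
    then show ?thesis unfolding Cf_def Sf_def slope_sq_def by (rule div_rewrite)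
  qed
  obtain U where U: "is_subrep d A s t U" "\<forall>v. zero_rep v \<subseteq> U v \<and> U v \<subseteq> full_rep d v"
      "U \<noteq> zero_rep" "U \<noteq> full_rep d" "\<not> slope_sq \<Theta> \<sigma> zero_rep U \<le> slope_sq \<Theta> \<sigma> zero_rep (full_rep d :: 'v \<Rightarrow> (nat \<Rightarrow> 'k) set)"
    using assms(3) unfolding semistable_def semistable_sq_def by blast
  define TU where "TU = lin_dim \<Theta> U"
  define SU where "SU = lin_dim \<sigma> U"
  have SUpos: "SU > 0"
  proof -
    have "lin_dim \<sigma> (zero_rep :: 'v \<Rightarrow> (nat \<Rightarrow> 'k) set) < lin_dim \<sigma> U"
      using lin_dim_mono[OF sg, of zero_rep U d] zgood U(2,3) subrep_good[OF U(1)] by blast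
    then show ?thesis by (simp add: SU_def lin_dim_zero)
  qed
  have SUlt: "SU < SM"
    using lin_dim_mono[OF sg, of U "full_rep d" d] fullgood U(2,4) subrep_good[OF U(1)]
    unfolding SU_def SM_def by blast
  have SMpos: "SM > 0" using SUpos SUlt by simp
  have slU: "slope_sq \<Theta> \<sigma> zero_rep U = real_of_int TU / real_of_int SU"
    by (simp add: slope_sq_def lin_sq_def lin_dim_zero TU_def SU_def)
  have slM: "slope_sq \<Theta> \<sigma> zero_rep (full_rep d :: 'v \<Rightarrow> (nat \<Rightarrow> 'k) set) = real_of_int TM / real_of_int SM"
    by (simp add: slope_sq_def lin_sq_def lin_dim_zero TM_def SM_def)
  have "real_of_int TM / real_of_int SM < real_of_int TU / real_of_int SU"
    using U(5) slU slM by simp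
  then have "real_of_int TM * real_of_int SU < real_of_int TU * real_of_int SM"
    using SUpos SMpos by (simp add: divide_less_eq less_divide_eq field_simps)
  then have TUSM: "TM * SU < TU * SM" by (simp flip: of_int_mult)
  define F2 where "F2 = (\<lambda>j::nat. if j = 0 then zero_rep else if j = 1 then U else (full_rep d :: 'v \<Rightarrow> (nat \<Rightarrow> 'k) set))"
  define G2 where "G2 = (\<lambda>j::nat. real j - 1)"
  have wf2: "is_weighted_filtration d A s t 1 F2 G2"
    unfolding is_weighted_filtration_def is_filtration_def
  proof (intro conjI ballI)
    show "F2 0 = zero_rep" by (simp add: F2_def)
    show "F2 (1 + 1) = full_rep d" by (simp add: F2_def)
    fix i assume "i \<in> {1..1+1::nat}"
    then have i: "i = 1 \<or> i = 2" by auto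
    show "is_subrep d A s t (F2 i)" using i U(1) fullsub by (auto simp: F2_def)
    show "\<forall>v. F2 (i - 1) v \<subseteq> F2 i v" using i U(2) by (auto simp: F2_def)
    show "F2 (i - 1) \<noteq> F2 i" using i U(3,4) by (auto simp: F2_def)
  next
    fix i assume "i \<in> {1..1::nat}"
    then show "G2 i < G2 (i + 1)" by (simp add: G2_def)
  qed
  have sum2: "(\<Sum>j=1..1+1. f j) = f 1 + f 2" for f :: "nat \<Rightarrow> real"
    by (simp add: numeral_2_eq_2)
  have kf2: "kf (Cf F2) (Sf F2) (1+1) G2 = Cf F2 2 / sqrt (Sf F2 2)"
    unfolding kf_def sum2 by (simp add: G2_def)
  have C22: "Cf F2 2 = real_of_int (TU * SM - TM * SU)"
    by (simp add: Cf_def F2_def lin_sq_def TM_def SM_def TU_def SU_def algebra_simps)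
  have S22: "Sf F2 2 = real_of_int (SM - SU)"
    by (simp add: Sf_def F2_def lin_sq_def SM_def SU_def)
  have kf2pos: "kf (Cf F2) (Sf F2) (1+1) G2 > 0"
  proof -
    have a: "real_of_int (TU * SM - TM * SU) > 0" using TUSM by (simp only: of_int_pos diff_gt_0_iff_gt)
    have b: "sqrt (real_of_int (SM - SU)) > 0" using SUlt by simp
    show ?thesis unfolding kf2 C22 S22 using a b by (rule divide_pos_pos)
  qed
  have kfFpos: "kf (Cf F) (Sf F) (n+1) \<Gamma> > 0"
  proof -
    have "kempf_fun d \<Theta> \<sigma> 1 F2 G2 \<le> kempf_fun d \<Theta> \<sigma> n F \<Gamma>" using maxK wf2 by blast
    then show ?thesis using kf2pos unfolding keq by simp
  qed
  have inc1: "\<forall>j\<in>{1..<n+1}. \<Gamma> j < \<Gamma> (j+1)" using inc by (simp add: atLeastLessThanSuc_atLeastAtMost)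
  have maxG: "\<forall>G'. (\<forall>j\<in>{1..<n+1}. G' j < G' (j+1)) \<longrightarrow> kf (Cf F) (Sf F) (n+1) G' \<le> kf (Cf F) (Sf F) (n+1) \<Gamma>"
  proof (intro allI impI)
    fix G' :: "nat \<Rightarrow> real" assume "\<forall>j\<in>{1..<n+1}. G' j < G' (j+1)"
    then have "is_weighted_filtration d A s t n F G'"
      using filt by (simp add: is_weighted_filtration_def atLeastLessThanSuc_atLeastAtMost)
    then have "kempf_fun d \<Theta> \<sigma> n F G' \<le> kempf_fun d \<Theta> \<sigma> n F \<Gamma>" using maxK by blast
    then show "kf (Cf F) (Sf F) (n+1) G' \<le> kf (Cf F) (Sf F) (n+1) \<Gamma>" unfolding keq .
  qed
  obtain l where l: "l > 0" and Gl: "\<forall>j\<in>{1..n+1}. \<Gamma> j = l * (Cf F j / Sf F j)"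
    using lemA[OF Sf_pos inc1 kfFpos maxG] by blast
  have slopes: "\<forall>i\<in>{1..n}. slope_sq \<Theta> \<sigma> (F (i - 1)) (F i) > slope_sq \<Theta> \<sigma> (F i) (F (i + 1))"
  proof
    fix i assume i: "i \<in> {1..n}"
    have i1: "i \<in> {1..n+1}" "i + 1 \<in> {1..n+1}" using i by auto
    have "l * (Cf F i / Sf F i) < l * (Cf F (i+1) / Sf F (i+1))"
      using inc i Gl i1 by metis
    then have "Cf F i / Sf F i < Cf F (i+1) / Sf F (i+1)" by (rule mult_less_cancel_left_pos[OF l, THEN iffD1])
    moreover have "Cf F i / Sf F i = real_of_int TM - real_of_int SM * slope_sq \<Theta> \<sigma> (F (i-1)) (F i)"
      using rat Sf_pos i1 by (metis less_irrefl)
    moreover have "Cf F (i+1) / Sf F (i+1) = real_of_int TM - real_of_int SM * slope_sq \<Theta> \<sigma> (F i) (F (i+1))"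
      using rat[of F "i+1"] Sf_pos i1 by (metis add_diff_cancel_right' less_irrefl)
    ultimately show "slope_sq \<Theta> \<sigma> (F (i - 1)) (F i) > slope_sq \<Theta> \<sigma> (F i) (F (i + 1))"
      using SMpos by simp
  qed
  have semi: "\<forall>i\<in>{1..n+1}. semistable_sq d A s t \<Theta> \<sigma> (F (i - 1)) (F i)"
  proof
    fix i assume i: "i \<in> {1..n+1}"
    show "semistable_sq d A s t \<Theta> \<sigma> (F (i - 1)) (F i)"
      unfolding semistable_sq_def
    proof (intro allI impI)
      fix W assume W: "is_subrep d A s t W" and Wi: "\<forall>v. F (i - 1) v \<subseteq> W v \<and> W v \<subseteq> F i v"
        and WL: "W \<noteq> F (i - 1)" and WN: "W \<noteq> F i"
      show "slope_sq \<Theta> \<sigma> (F (i - 1)) W \<le> slope_sq \<Theta> \<sigma> (F (i - 1)) (F i)"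
      proof (rule ccontr)
        assume "\<not> ?thesis"
        then have lt: "slope_sq \<Theta> \<sigma> (F (i - 1)) (F i) < slope_sq \<Theta> \<sigma> (F (i - 1)) W" by simp
        define F' where "F' = (\<lambda>j. if j < i then F j else if j = i then W else F (j - 1))"
        have i1: "1 \<le> i" "i \<le> n + 1" using i by auto
        have Wg: "\<And>v. V.subspace (W v) \<and> W v \<subseteq> ambient (d v)" by (rule subrep_good[OF W])
        have S'i: "Sf F' i > 0"
        proof -
          have "lin_dim \<sigma> (F (i - 1)) < lin_dim \<sigma> W"
            using lin_dim_mono[OF sg, of "F (i-1)" W d] filt_good[OF filt, of "i-1"] Wg Wi WL i1
            by (metis le_add2 le_diff_conv diff_le_self order_trans)
          then show ?thesis using i1 by (simp add: Sf_def F'_def lin_sq_def)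
        qed
        have lo: "\<forall>j<i. Cf F' j = Cf F j \<and> Sf F' j = Sf F j"
          by (simp add: Cf_def Sf_def F'_def)
        have hi: "\<forall>j\<ge>i+2. Cf F' j = Cf F (j-1) \<and> Sf F' j = Sf F (j-1)"
        proof (intro allI impI)
          fix j :: nat assume "j \<ge> i + 2"
          then have "\<not> j < i" "j \<noteq> i" "\<not> j - 1 < i" "j - 1 \<noteq> i" by auto
          then show "Cf F' j = Cf F (j-1) \<and> Sf F' j = Sf F (j-1)"
            by (simp add: Cf_def Sf_def F'_def)
        qed
        have Fi1: "F' (i - 1) = F (i - 1)" "F' i = W" "F' (i + 1 - 1) = W" "F' (i + 1) = F i"
          using i1 by (simp_all add: F'_def)
        have spC: "Cf F' i + Cf F' (i+1) = Cf F i"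
        proof -
          have "TM * lin_sq \<sigma> (F (i - 1)) W - SM * lin_sq \<Theta> (F (i - 1)) W
              + (TM * lin_sq \<sigma> W (F i) - SM * lin_sq \<Theta> W (F i))
              = TM * lin_sq \<sigma> (F (i - 1)) (F i) - SM * lin_sq \<Theta> (F (i - 1)) (F i)"
            by (simp add: lin_sq_def algebra_simps)
          then show ?thesis unfolding Cf_def Fi1 by (metis of_int_add)
        qed
        have spS: "Sf F' i + Sf F' (i+1) = Sf F i"
        proof -
          have "lin_sq \<sigma> (F (i - 1)) W + lin_sq \<sigma> W (F i) = lin_sq \<sigma> (F (i - 1)) (F i)"
            by (simp add: lin_sq_def)
          then show ?thesis unfolding Sf_def Fi1 by (metis of_int_add)
        qed
        have ltC: "Cf F' i / Sf F' i < Cf F i / Sf F i"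
        proof -
          have "i \<in> {1..n+1}" using i .
          then have "Sf F i > 0" using Sf_pos by blast
          then have e1: "Cf F i / Sf F i = real_of_int TM - real_of_int SM * slope_sq \<Theta> \<sigma> (F (i-1)) (F i)"
            using rat[of F i] by simp
          have e2: "Cf F' i / Sf F' i = real_of_int TM - real_of_int SM * slope_sq \<Theta> \<sigma> (F (i-1)) W"
            using rat[of F' i] S'i Fi1 by simp
          have "real_of_int SM * slope_sq \<Theta> \<sigma> (F (i-1)) (F i) < real_of_int SM * slope_sq \<Theta> \<sigma> (F (i-1)) W"
            using lt SMpos by simp
          then show ?thesis using e1 e2 by simp
        qed
        obtain G' where incG': "\<forall>j\<in>{1..<n+1+1}. G' j < G' (j+1)"
          and bigger: "kf (Cf F) (Sf F) (n+1) \<Gamma> < kf (Cf F') (Sf F') (n+1+1) G'"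
          using lemC[OF i1 Sf_pos S'i lo hi spC spS l Gl inc1 kfFpos ltC] by blast
        have filt': "is_filtration d A s t (n+1) F'"
          unfolding is_filtration_def
        proof (intro conjI)
          show "F' 0 = zero_rep" using i1 F0 by (simp add: F'_def)
          show "F' (n + 1 + 1) = full_rep d" using i1 Fn by (simp add: F'_def)
        next
          show "\<forall>j\<in>{1..n+1+1}. is_subrep d A s t (F' j)"
          proof
          fix j assume j: "j \<in> {1..n+1+1}"
          consider "j < i" | "j = i" | "j = i + 1" | "j \<ge> i + 2" by linarith
          then show "is_subrep d A s t (F' j)"
          proof cases
            case 1 then have "j \<in> {1..n+1}" using j i1 by auto
            then show ?thesis using subF 1 by (simp add: F'_def)
          next
            case 2 then show ?thesis using W by (simp add: F'_def)
          next
            case 3 then show ?thesis using subF i by (simp add: F'_def)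
          next
            case 4 then have "j - 1 \<in> {1..n+1}" using j i1 by auto
            then show ?thesis using subF 4 by (simp add: F'_def)
          qed
          qed
        next
          show "\<forall>j\<in>{1..n+1+1}. (\<forall>v. F' (j - 1) v \<subseteq> F' j v) \<and> F' (j - 1) \<noteq> F' j"
          proof
          fix j assume j: "j \<in> {1..n+1+1}"
          consider "j < i" | "j = i" | "j = i + 1" | "j \<ge> i + 2" by linarith
          then show "(\<forall>v. F' (j - 1) v \<subseteq> F' j v) \<and> F' (j - 1) \<noteq> F' j"
          proof cases
            case 1 then have "j \<in> {1..n+1}" using j i1 by auto
            then have "(\<forall>v. F (j - 1) v \<subseteq> F j v) \<and> F (j - 1) \<noteq> F j" using chain by blast
            moreover have "j - 1 < i" using 1 by simp
            ultimately show ?thesis using 1 by (simp add: F'_def)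
          next
            case 2 then show ?thesis using Wi WL i1 by (simp add: F'_def)
          next
            case 3 then show ?thesis using Wi WN i1 by (simp add: F'_def)
          next
            case 4 then have jj: "j - 1 \<in> {1..n+1}" using j i1 by auto
            then have ch: "(\<forall>v. F (j - 1 - 1) v \<subseteq> F (j - 1) v) \<and> F (j - 1 - 1) \<noteq> F (j - 1)" using chain by blast
            have neq: "\<not> j - 1 < i" "j - 1 \<noteq> i" "\<not> j < i" "j \<noteq> i" using 4 by auto
            have "F' (j - 1) = F (j - 1 - 1)" "F' j = F (j - 1)" using neq by (simp_all add: F'_def)
            then show ?thesis using ch by simp
          qed
          qed
        qed
        have "is_weighted_filtration d A s t (n+1) F' G'"
          unfolding is_weighted_filtration_def using filt' incG'
          by (simp add: atLeastLessThanSuc_atLeastAtMost)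
        then have "kempf_fun d \<Theta> \<sigma> (n+1) F' G' \<le> kempf_fun d \<Theta> \<sigma> n F \<Gamma>" using maxK by blast
        then have "kf (Cf F') (Sf F') (n+1+1) G' \<le> kf (Cf F) (Sf F) (n+1) \<Gamma>" unfolding keq .
        then show False using bigger by simp
      qed
    qed
  qed
  show ?thesis unfolding is_HN_filtration_def using filt slopes semi by blast
qed

end
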